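(* Let $\tau\in\mathbb N$ and let $Y_1,Y_2,\dots$ be independent with $Y_i\sim N_p(\mu_1,\sigma^2I)$ for $i\le\tau$ and $Y_i\sim N_p(\mu_2,\sigma^2I)$ for $i>\tau$, $\sigma>0$. Let $\phi=\|\mu_1-\mu_2\|_2$, $k=\|\mu_1-\mu_2\|_0\ge1$. Let $t>\tau$. Then there exists $s\in\mathcal S^{(t)}$ with $k/2\le s\le k$ if $k<\sqrt{p\log t}$ and $s=p$ if $k\ge\sqrt{p\log t}$, and for every $\delta\in(0,1)$ there is a constant $C>0$ depending only on $\delta$, such that for every $\lambda>0$ and every integer $1\le g\le t-\tau$, $$\mathbb P\Big\{A^{(t)}_{s,g}-\lambda z(s,p,t)\ge\psi-(C+2\lambda)z(k,p,t)-C\psi^{1/2}\Big\}\ge1-\delta,\qquad\psi=\frac{g\tau^2}{t(t-g)}\frac{\phi^2}{\sigma^2}.$$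
   Context: $\log$ natural. $\|v\|_0$ is the number of nonzero entries. CUSUM vector: $C^{(t)}_g=\{g/(t(t-g))\}^{1/2}\sum_{i=1}^{t-g}Y_i-\{(t-g)/(tg)\}^{1/2}\sum_{i=t-g+1}^tY_i$, entries $C^{(t)}_g(j)$. Threshold: $a^2(s,t)=4\log(ep s^{-2}\log t)\,\mathbb 1\{s\le\sqrt{p\log t}\}$, $a(s,t)\ge0$. For $a\ge0$, $\nu_a=\mathbb E\{Z^2\mid|Z|>a\}$, $Z\sim N(0,1)$. $A^{(t)}_{s,g}=\sum_{j=1}^p\{C^{(t)}_g(j)^2/\sigma^2-\nu_{a(s,t)}\}\mathbb 1\{|C^{(t)}_g(j)|/\sigma>a(s,t)\}$. $\mathcal S^{(t)}=\{1,2,4,\dots,2^{\lfloor\log_2(\sqrt{p\log t}\wedge p)\rfloor}\}\cup\{p\}$. $z(s,p,t)=\sqrt{p\log t}$ if $s>\sqrt{p\log t}$, and $z(s,p,t)=s\log\{ep\log t/s^2\}\vee\log t$ otherwise. *)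

theory Defs
  imports "HOL-Probability.Probability"
begin

text \<open>A realised data sequence is y :: nat => nat => real, with y i j the j-th
coordinate (j < p) of observation Y_i (i >= 1).\<close>

definition cusum :: "(nat \<Rightarrow> nat \<Rightarrow> real) \<Rightarrow> nat \<Rightarrow> nat \<Rightarrow> nat \<Rightarrow> real" where
  "cusum y t g j =
     sqrt (real g / (real t * (real t - real g))) * (\<Sum>i=1..t-g. y i j)
   - sqrt ((real t - real g) / (real t * real g)) * (\<Sum>i=t-g+1..t. y i j)"

definition thr_sq :: "nat \<Rightarrow> nat \<Rightarrow> nat \<Rightarrow> real" where
  "thr_sq p s t = 4 * ln (exp 1 * real p * (real s) powi (-2) * ln (real t))
                  * (if real s \<le> sqrt (real p * ln (real t)) then 1 else 0)"

definition thr :: "nat \<Rightarrow> nat \<Rightarrow> nat \<Rightarrow> real" where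
  "thr p s t = sqrt (thr_sq p s t)"

definition nu :: "real \<Rightarrow> real" where
  "nu a = (LINT z:{z. \<bar>z\<bar> > a}|lborel. z\<^sup>2 * std_normal_density z)
        / (LINT z:{z. \<bar>z\<bar> > a}|lborel. std_normal_density z)"

definition Astat :: "nat \<Rightarrow> real \<Rightarrow> (nat \<Rightarrow> nat \<Rightarrow> real) \<Rightarrow> nat \<Rightarrow> nat \<Rightarrow> nat \<Rightarrow> real" where
  "Astat p \<sigma> y t s g =
     (\<Sum>j<p. ((cusum y t g j)\<^sup>2 / \<sigma>\<^sup>2 - nu (thr p s t))
            * (if \<bar>cusum y t g j\<bar> / \<sigma> > thr p s t then 1 else 0))"

definition Sgrid :: "nat \<Rightarrow> nat \<Rightarrow> nat set" where
  "Sgrid p t = {s. \<exists>i::nat. s = 2 ^ i \<and>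
       int i \<le> \<lfloor>log 2 (min (sqrt (real p * ln (real t))) (real p))\<rfloor>} \<union> {p}"

definition zfun :: "nat \<Rightarrow> nat \<Rightarrow> nat \<Rightarrow> real" where
  "zfun s p t = (if real s > sqrt (real p * ln (real t)) then sqrt (real p * ln (real t))
                 else max (real s * ln (exp 1 * real p * ln (real t) / (real s)\<^sup>2)) (ln (real t)))"

end

theory Submission
  imports Defs "HOL-Real_Asymp.Real_Asymp"
begin

definition ee :: "real \<Rightarrow> real" where "ee x = exp (- x\<^sup>2 / 2)"

lemma ee_pos: "ee x > 0" by (simp add: ee_def)
lemma ee_meas[measurable]: "ee \<in> borel_measurable borel" unfolding ee_def by measurable

lemma tail_conv:
  fixes f :: "real \<Rightarrow> real"
  assumes "a \<ge> 0" "\<And>x. x \<ge> a \<Longrightarrow> f x \<ge> 0" "f \<in> borel_measurable borel" "c \<ge> 0"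
    "(\<integral>\<^sup>+x. ennreal (f x) * indicator {a..} x \<partial>lborel) = ennreal c"
  shows "has_bochner_integral lborel (\<lambda>x. indicator {a..} x * f x) c"
proof (rule has_bochner_integral_nn_integral)
  show "(\<integral>\<^sup>+x. ennreal (indicator {a..} x * f x) \<partial>lborel) = ennreal c"
    using assms(5) by (subst nn_integral_cong[where v="\<lambda>x. ennreal (f x) * indicator {a..} x"]) (auto split: split_indicator)
  show "AE x in lborel. 0 \<le> indicator {a..} x * f x"
    using assms(2) by (auto split: split_indicator)
qed (use assms in auto)

lemma tail1: "a \<ge> 0 \<Longrightarrow> has_bochner_integral lborel (\<lambda>x. indicator {a..} x * (x * ee x)) (ee a)"
proof -
  assume a: "a \<ge> 0"
  have "(\<integral>\<^sup>+x. ennreal (x * ee x) * indicator {a..} x \<partial>lborel) = 0 - (- ee a)"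
  proof (rule nn_integral_FTC_atLeast)
    show "((\<lambda>x. - ee x) \<longlongrightarrow> 0) at_top" unfolding ee_def by real_asymp
  qed (use a in \<open>auto intro!: derivative_eq_intros simp: ee_def\<close>)
  then show ?thesis
    using a ee_pos[THEN less_imp_le]
    by (intro tail_conv) (auto simp: algebra_simps intro!: mult_nonneg_nonneg)
qed

lemma tail3: "a \<ge> 0 \<Longrightarrow> has_bochner_integral lborel (\<lambda>x. indicator {a..} x * (x^3 * ee x)) ((a\<^sup>2 + 2) * ee a)"
proof -
  assume a: "a \<ge> 0"
  have "(\<integral>\<^sup>+x. ennreal (x^3 * ee x) * indicator {a..} x \<partial>lborel) = 0 - (- (a\<^sup>2 + 2) * ee a)"
  proof (rule nn_integral_FTC_atLeast)
    show "((\<lambda>x. - (x\<^sup>2 + 2) * ee x) \<longlongrightarrow> 0) at_top" unfolding ee_def by real_asymp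
    fix x assume "a \<le> x"
    show "((\<lambda>x. - (x\<^sup>2 + 2) * ee x) has_real_derivative x ^ 3 * ee x) (at x)"
      unfolding ee_def by (auto intro!: derivative_eq_intros simp: algebra_simps power2_eq_square power3_eq_cube)
  qed (use a in \<open>auto simp: ee_def\<close>)
  then show ?thesis
    using a ee_pos[THEN less_imp_le]
    by (intro tail_conv) (auto simp: algebra_simps intro!: mult_nonneg_nonneg)
qed

lemma tail5: "a \<ge> 0 \<Longrightarrow> has_bochner_integral lborel (\<lambda>x. indicator {a..} x * (x^5 * ee x)) ((a^4 + 4*a\<^sup>2 + 8) * ee a)"
proof -
  assume a: "a \<ge> 0"
  have "(\<integral>\<^sup>+x. ennreal (x^5 * ee x) * indicator {a..} x \<partial>lborel) = 0 - (- (a^4 + 4*a\<^sup>2 + 8) * ee a)"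
  proof (rule nn_integral_FTC_atLeast)
    show "((\<lambda>x. - (x^4 + 4*x\<^sup>2 + 8) * ee x) \<longlongrightarrow> 0) at_top" unfolding ee_def by real_asymp
    fix x assume "a \<le> x"
    show "((\<lambda>x. - (x^4 + 4*x\<^sup>2 + 8) * ee x) has_real_derivative x ^ 5 * ee x) (at x)"
      unfolding ee_def by (auto intro!: derivative_eq_intros simp: algebra_simps power2_eq_square power3_eq_cube eval_nat_numeral)
  qed (use a in \<open>auto simp: ee_def\<close>)
  then show ?thesis
    using a ee_pos[THEN less_imp_le]
    by (intro tail_conv) (auto simp: algebra_simps intro!: mult_nonneg_nonneg)
qed

definition Tk :: "nat \<Rightarrow> real \<Rightarrow> real" where
  "Tk k a = (LINT z:{z. \<bar>z\<bar> > a}|lborel. z^k * std_normal_density z)"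

lemma Tk_alt: "Tk k a = (\<integral>z. indicator {z. \<bar>z\<bar> > a} z * (z^k * std_normal_density z) \<partial>lborel)"
  unfolding Tk_def set_lebesgue_integral_def by simp

lemma Tk_integrable: "integrable lborel (\<lambda>z. indicator {z. \<bar>z\<bar> > a} z * (z^k * std_normal_density z))"
proof -
  have "integrable lborel (\<lambda>z. (std_normal_density z * z^k) * indicator {z. \<bar>z\<bar> > a} z)"
    by (rule integrable_real_mult_indicator) (auto intro: integrable_std_normal_moment)
  then show ?thesis by (simp add: ac_simps)
qed

lemma nu_Tk: "nu a = Tk 2 a / Tk 0 a"
  unfolding nu_def Tk_def by simp

lemma snd_ee: "std_normal_density x = ee x / sqrt (2 * pi)"
  unfolding std_normal_density_def ee_def by simp

lemma Tk_zero:
  assumes "even k"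
  shows "Tk k 0 = fact k / (2 ^ (k div 2) * fact (k div 2))"
proof -
  have "Tk k 0 = (\<integral>z. std_normal_density z * z^k \<partial>lborel)"
    unfolding Tk_alt
  proof (intro integral_cong_AE)
    show "AE x in lborel. indicator {z. \<bar>z\<bar> > 0} x * (x ^ k * std_normal_density x) = std_normal_density x * x ^ k"
      using AE_lborel_singleton[of 0] by eventually_elim (auto split: split_indicator)
  qed auto
  also have "\<dots> = fact k / (2 ^ (k div 2) * fact (k div 2))"
    using integral_std_normal_moment_even[of "k div 2"] assms by simp
  finally show ?thesis .
qed

lemma ee_even: "ee (-x) = ee x" by (simp add: ee_def)

lemma Tk_two_side:
  assumes a: "a > 0" and k: "even k"
    and I: "has_bochner_integral lborel (\<lambda>x. indicator {a..} x * (x^(k+1) * ee x)) I"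
  shows "Tk k a \<le> 2 * I / (a * sqrt (2*pi))"
proof -
  define g where "g x = indicator {a..} x * (x^(k+1) * ee x)" for x :: real
  have gi: "integrable lborel g" using I unfolding g_def by (simp add: has_bochner_integral_iff)
  have gI: "integral\<^sup>L lborel g = I" using I unfolding g_def by (simp add: has_bochner_integral_iff)
  have gi2: "integrable lborel (\<lambda>x. g (0 + (-1) * x))"
    by (rule lborel_integrable_real_affine[OF gi]) simp
  have gI2: "(\<integral>x. g (0 + (-1) * x) \<partial>lborel) = I"
    using lborel_integral_real_affine[of "-1" g 0] gI by simp
  have pw: "indicator {z. \<bar>z\<bar> > a} z * (z^k * std_normal_density z)
      \<le> (g z + g (0 + (-1) * z)) / (a * sqrt (2*pi))" for z
  proof (cases "\<bar>z\<bar> > a")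
    case True
    have e: "\<bar>z\<bar>^k = z^k" using k by (simp add: power_even_abs)
    have "z^k * std_normal_density z = \<bar>z\<bar>^k * ee z / sqrt (2*pi)"
      by (simp add: snd_ee e)
    also have "\<dots> \<le> (\<bar>z\<bar>^(k+1) / a) * ee z / sqrt (2*pi)"
    proof -
      have "\<bar>z\<bar>^k * a \<le> \<bar>z\<bar>^k * \<bar>z\<bar>" using True by (intro mult_left_mono) auto
      then have "\<bar>z\<bar>^k \<le> \<bar>z\<bar>^(k+1) / a" using a by (simp add: field_simps)
      then show ?thesis using ee_pos[of z] by (intro divide_right_mono mult_right_mono) auto
    qed
    also have "(\<bar>z\<bar>^(k+1) / a) * ee z / sqrt (2*pi) = (g z + g (0 + (-1) * z)) / (a * sqrt (2*pi))"
    proof -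
      have "\<bar>z\<bar>^(k+1) * ee z = g z + g (0 + (-1) * z)"
        using True a k unfolding g_def by (auto simp: ee_even split: split_indicator)
      then show ?thesis by (simp add: field_simps)
    qed
    finally show ?thesis using True by simp
  next
    case False
    have gnn: "g x \<ge> 0" for x
      unfolding g_def using ee_pos[of x] a by (auto split: split_indicator intro!: mult_nonneg_nonneg)
    have "g z \<ge> 0" "g (0 + (-1) * z) \<ge> 0" by (rule gnn)+
    then show ?thesis using False a by (auto intro!: divide_nonneg_pos)
  qed
  have "Tk k a \<le> (\<integral>z. (g z + g (0 + (-1) * z)) / (a * sqrt (2*pi)) \<partial>lborel)"
    unfolding Tk_alt by (intro integral_mono Tk_integrable integrable_divide Bochner_Integration.integrable_add gi gi2 pw)
  also have "\<dots> = 2 * I / (a * sqrt (2*pi))"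
    using gi gi2 gI gI2 by simp
  finally show ?thesis .
qed

lemma ee_mono: "0 \<le> x \<Longrightarrow> x \<le> y \<Longrightarrow> ee y \<le> ee x"
  unfolding ee_def by (simp add: power_mono)

lemma T0_lower:
  assumes a: "a > 0"
  shows "Tk 0 a \<ge> ee (a + 1/a) / (a * sqrt (2*pi))"
proof -
  define b where "b = a + 1/a"
  have "(\<integral>z. indicator {a<..b} z * (ee b / sqrt (2*pi)) \<partial>lborel) = (b - a) * (ee b / sqrt (2*pi))"
    using a by (simp add: b_def)
  also have "\<dots> = ee (a + 1/a) / (a * sqrt (2*pi))" using a by (simp add: b_def field_simps)
  finally have eq: "(\<integral>z. indicator {a<..b} z * (ee b / sqrt (2*pi)) \<partial>lborel) = ee (a + 1/a) / (a * sqrt (2*pi))" .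
  have "(\<integral>z. indicator {a<..b} z * (ee b / sqrt (2*pi)) \<partial>lborel) \<le> Tk 0 a"
    unfolding Tk_alt
  proof (intro integral_mono Tk_integrable)
    have ab: "a \<le> b" using a by (simp add: b_def)
    have "integrable lborel (\<lambda>z. (ee b / sqrt (2*pi)) * indicator {a<..b} z)"
      by (intro integrable_mult_right integrable_real_indicator) (use ab in auto)
    then show "integrable lborel (\<lambda>z. indicator {a<..b} z * (ee b / sqrt (2*pi)))"
      by (simp add: ac_simps)
    fix z show "indicator {a<..b} z * (ee b / sqrt (2*pi)) \<le> indicator {z. \<bar>z\<bar> > a} z * (z^0 * std_normal_density z)"
      using a ee_mono[of z b] ee_pos[of z] by (auto simp: snd_ee split: split_indicator intro!: divide_right_mono)
  qed
  then show ?thesis using eq by simp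
qed

lemma T2_ge: "Tk 2 a \<ge> a\<^sup>2 * Tk 0 a" if "a \<ge> 0"
proof -
  have "a\<^sup>2 * Tk 0 a = (\<integral>z. a\<^sup>2 * (indicator {z. \<bar>z\<bar> > a} z * (z^0 * std_normal_density z)) \<partial>lborel)"
    unfolding Tk_alt by simp
  also have "\<dots> \<le> Tk 2 a" unfolding Tk_alt
  proof (intro integral_mono Tk_integrable integrable_mult_right)
    fix z show "a\<^sup>2 * (indicator {z. \<bar>z\<bar> > a} z * (z^0 * std_normal_density z)) \<le> indicator {z. \<bar>z\<bar> > a} z * (z^2 * std_normal_density z)"
    proof (cases "\<bar>z\<bar> > a")
      case True
      then have "a\<^sup>2 \<le> z\<^sup>2" using that by (metis abs_ge_zero abs_le_square_iff abs_of_nonneg less_imp_le)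
      then show ?thesis using True by (auto intro!: mult_right_mono)
    qed auto
  qed
  finally show ?thesis .
qed

lemma T0_pos: "a \<ge> 0 \<Longrightarrow> Tk 0 a > 0"
proof (cases "a = 0")
  case True then show ?thesis using Tk_zero[of 0] by simp
next
  case False
  assume "a \<ge> 0" then have "a > 0" using False by simp
  then show ?thesis using T0_lower[of a] ee_pos[of "a + 1/a"]
    by (smt (verit) divide_pos_pos mult_pos_pos pi_gt_zero real_sqrt_gt_0_iff)
qed

lemma exp_half_le2: "exp (1/2::real) \<le> 2"
  using exp_bound_half[of "1/2::real"] by simp

lemma exp1_le4: "exp (1::real) \<le> 4"
proof -
  have "exp (1::real) = exp (1/2) * exp (1/2)" by (simp flip: exp_add)
  also have "\<dots> \<le> 2 * 2" using exp_half_le2 by (intro mult_mono) auto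
  finally show ?thesis by simp
qed

lemma ln2_ge_half: "ln (2::real) \<ge> 1/2"
  using exp_half_le2 by (subst ln_ge_iff) auto

lemma ee_ratio: "a > 0 \<Longrightarrow> ee a = exp (1 + 1/(2*a\<^sup>2)) * ee (a + 1/a)"
  unfolding ee_def by (simp add: flip: exp_add) (simp add: field_simps power2_eq_square)

lemma nu_big: assumes a: "a \<ge> 2" shows "nu a \<le> 48 * a\<^sup>2"
proof -
  have a0: "a > 0" using a by simp
  have T2: "Tk 2 a \<le> 2 * ((a\<^sup>2 + 2) * ee a) / (a * sqrt (2*pi))"
    using Tk_two_side[of a 2 "(a\<^sup>2 + 2) * ee a"] tail3[of a] a0 by simp
  have T0: "Tk 0 a \<ge> ee (a + 1/a) / (a * sqrt (2*pi))" by (rule T0_lower[OF a0])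
  have pos: "ee (a + 1/a) / (a * sqrt (2*pi)) > 0" using ee_pos a0 by simp
  have "nu a = Tk 2 a / Tk 0 a" by (rule nu_Tk)
  also have "\<dots> \<le> (2 * ((a\<^sup>2 + 2) * ee a) / (a * sqrt (2*pi))) / (ee (a + 1/a) / (a * sqrt (2*pi)))"
  proof (intro frac_le)
    show "0 \<le> 2 * ((a\<^sup>2 + 2) * ee a) / (a * sqrt (2*pi))"
      using ee_pos[of a] a0 by (intro divide_nonneg_pos mult_nonneg_nonneg) auto
  qed (use T2 T0 pos in auto)
  also have "\<dots> = 2 * (a\<^sup>2 + 2) * exp (1 + 1/(2*a\<^sup>2))"
    using a0 ee_pos[of "a + 1/a"] by (simp add: ee_ratio[OF a0] field_simps)
  also have "\<dots> \<le> 2 * (3/2 * a\<^sup>2) * 16"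
  proof (rule mult_mono)
    have "a\<^sup>2 \<ge> 4" using power_mono[of 2 a 2] a by simp
    then show "2 * (a\<^sup>2 + 2) \<le> 2 * (3/2 * a\<^sup>2)" by simp
    have "1/(2*a\<^sup>2) \<le> 1" using \<open>a\<^sup>2 \<ge> 4\<close> by (simp add: divide_le_eq)
    then have "exp (1 + 1/(2*a\<^sup>2)) \<le> exp (1 + 1)" by simp
    also have "exp (1 + 1::real) = exp 1 * exp 1" by (simp flip: exp_add)
    also have "\<dots> \<le> 4 * 4" using exp1_le4 by (intro mult_mono) auto
    finally show "exp (1 + 1/(2*a\<^sup>2)) \<le> 16" by simp
  qed auto
  finally show ?thesis by simp
qed

lemma T4_big: assumes a: "a \<ge> 2" shows "Tk 4 a \<le> 5 * a^3 * ee a"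
proof -
  have a0: "a > 0" using a by simp
  have T4: "Tk 4 a \<le> 2 * ((a^4 + 4*a\<^sup>2 + 8) * ee a) / (a * sqrt (2*pi))"
    using Tk_two_side[of a 4 "(a^4 + 4*a\<^sup>2 + 8) * ee a"] tail5[of a] a0 by simp
  have s1: "sqrt (2*pi) \<ge> 1" using pi_gt3 by simp
  have "a\<^sup>2 \<ge> 4" using power_mono[of 2 a 2] a by simp
  have "a^4 + 4*a\<^sup>2 + 8 \<le> 5/2 * a^4"
  proof -
    have "a^4 = a\<^sup>2 * a\<^sup>2" by (simp add: power2_eq_square eval_nat_numeral)
    then have "a^4 \<ge> 4 * a\<^sup>2" using \<open>a\<^sup>2 \<ge> 4\<close> mult_right_mono[of 4 "a\<^sup>2" "a\<^sup>2"] by simp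
    moreover have "a^4 \<ge> 16" using power_mono[of 2 a 4] a by simp
    ultimately show ?thesis by simp
  qed
  have "2 * ((a^4 + 4*a\<^sup>2 + 8) * ee a) / (a * sqrt (2*pi)) \<le> 2 * ((a^4 + 4*a\<^sup>2 + 8) * ee a) / a"
    using a0 s1 ee_pos[of a] \<open>a\<^sup>2 \<ge> 4\<close>
    by (intro divide_left_mono) (auto intro!: mult_nonneg_nonneg add_nonneg_nonneg)
  also have "\<dots> \<le> 2 * (5/2 * a^4 * ee a) / a"
    using a0 ee_pos[of a] \<open>a^4 + 4*a\<^sup>2 + 8 \<le> 5/2 * a^4\<close> by (intro divide_right_mono mult_left_mono mult_right_mono) auto
  also have "\<dots> = 5 * a^3 * ee a" using a0 by (simp add: field_simps eval_nat_numeral)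
  finally show ?thesis using T4 by simp
qed

lemma T_at0: "Tk 0 0 = 1" "Tk 2 0 = 1" "Tk 4 0 = 3" "nu 0 = 1"
  using Tk_zero[of 0] Tk_zero[of 2] Tk_zero[of 4] by (simp_all add: nu_Tk fact_numeral)

lemma (in prob_space) sq_sum_indep:
  fixes V :: "nat \<Rightarrow> 'a \<Rightarrow> real"
  assumes "finite J" "indep_vars (\<lambda>_. borel) V J"
    "\<And>j. j \<in> J \<Longrightarrow> integrable M (\<lambda>\<omega>. (V j \<omega>)\<^sup>2)"
    "\<And>j. j \<in> J \<Longrightarrow> expectation (V j) = 0"
  shows "integrable M (\<lambda>\<omega>. (\<Sum>j\<in>J. V j \<omega>)\<^sup>2) \<and>
         expectation (\<lambda>\<omega>. (\<Sum>j\<in>J. V j \<omega>)\<^sup>2) = (\<Sum>j\<in>J. expectation (\<lambda>\<omega>. (V j \<omega>)\<^sup>2))"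
  using assms
proof (induction J rule: finite_induct)
  case empty then show ?case by simp
next
  case (insert i J)
  have meas: "\<And>j. j \<in> insert i J \<Longrightarrow> random_variable borel (V j)"
    using insert.prems(1) unfolding indep_vars_def by auto
  have intV: "\<And>j. j \<in> insert i J \<Longrightarrow> integrable M (V j)"
    using meas insert.prems(2) by (blast intro: square_integrable_imp_integrable)
  have IH: "integrable M (\<lambda>\<omega>. (\<Sum>j\<in>J. V j \<omega>)\<^sup>2) \<and>
         expectation (\<lambda>\<omega>. (\<Sum>j\<in>J. V j \<omega>)\<^sup>2) = (\<Sum>j\<in>J. expectation (\<lambda>\<omega>. (V j \<omega>)\<^sup>2))"
    using insert by (intro insert.IH) (auto intro: indep_vars_subset)
  have intS: "integrable M (\<lambda>\<omega>. \<Sum>j\<in>J. V j \<omega>)" using intV by auto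
  have ind: "indep_var borel (V i) borel (\<lambda>\<omega>. \<Sum>j\<in>J. V j \<omega>)"
    using insert by (intro indep_vars_sum) auto
  have prod_int: "integrable M (\<lambda>\<omega>. V i \<omega> * (\<Sum>j\<in>J. V j \<omega>))"
    by (rule indep_var_integrable[OF ind intV intS]) simp
  have prod_E: "expectation (\<lambda>\<omega>. V i \<omega> * (\<Sum>j\<in>J. V j \<omega>)) = 0"
    using indep_var_lebesgue_integral[OF ind intV intS] insert.prems(3) by simp
  have eq: "(\<lambda>\<omega>. (\<Sum>j\<in>insert i J. V j \<omega>)\<^sup>2) =
      (\<lambda>\<omega>. (V i \<omega>)\<^sup>2 + 2 * (V i \<omega> * (\<Sum>j\<in>J. V j \<omega>)) + (\<Sum>j\<in>J. V j \<omega>)\<^sup>2)"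
    using insert by (simp add: power2_eq_square algebra_simps)
  have i2: "integrable M (\<lambda>\<omega>. (V i \<omega>)\<^sup>2)" using insert.prems(2) by simp
  show ?case
    unfolding eq using IH prod_int prod_E i2 insert by simp
qed

lemma (in prob_space) std_moment:
  assumes Z: "distributed M lborel Z std_normal_density"
  shows "integrable M (\<lambda>\<omega>. Z \<omega> ^ k)" "expectation (\<lambda>\<omega>. Z \<omega> ^ k) = (\<integral>x. std_normal_density x * x^k \<partial>lborel)"
proof -
  show "integrable M (\<lambda>\<omega>. Z \<omega> ^ k)"
    using distributed_integrable[OF Z, of "\<lambda>x. x^k"] integrable_std_normal_moment[of k] by simp
  show "expectation (\<lambda>\<omega>. Z \<omega> ^ k) = (\<integral>x. std_normal_density x * x^k \<partial>lborel)"
    using distributed_integral[OF Z, of "\<lambda>x. x^k"] by simp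
qed

lemma (in prob_space) std_moments:
  assumes Z: "distributed M lborel Z std_normal_density"
  shows "expectation (\<lambda>\<omega>. Z \<omega> ^ 1) = 0" "expectation (\<lambda>\<omega>. Z \<omega> ^ 2) = 1"
    "expectation (\<lambda>\<omega>. Z \<omega> ^ 3) = 0" "expectation (\<lambda>\<omega>. Z \<omega> ^ 4) = 3"
  using std_moment(2)[OF Z, of 1] std_moment(2)[OF Z, of 2] std_moment(2)[OF Z, of 3] std_moment(2)[OF Z, of 4]
    integral_std_normal_moment_odd[of 0] integral_std_normal_moment_odd[of 1]
    integral_std_normal_moment_even[of 1] integral_std_normal_moment_even[of 2]
  by (simp_all add: fact_numeral)

lemma (in prob_space) signal_h:
  fixes m :: real
  assumes Z: "distributed M lborel Z std_normal_density"
  defines "h \<equiv> \<lambda>\<omega>. 2 * m * Z \<omega> + (Z \<omega>)\<^sup>2 - 1"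
  shows "integrable M (\<lambda>\<omega>. (h \<omega>)\<^sup>2)" "expectation h = 0" "expectation (\<lambda>\<omega>. (h \<omega>)\<^sup>2) = 4 * m\<^sup>2 + 2"
proof -
  note I = std_moment(1)[OF Z]
  note E = std_moments[OF Z]
  have I1: "integrable M Z" using I[of 1] by simp
  have E1: "expectation Z = 0" using E(1) by simp
  have h: "h = (\<lambda>\<omega>. 2 * m * Z \<omega> ^ 1 + Z \<omega> ^ 2 - 1)" unfolding h_def by simp
  show "expectation h = 0" unfolding h using I[of 1] I[of 2] E by (simp add: prob_space)
  have h2: "(\<lambda>\<omega>. (h \<omega>)\<^sup>2) = (\<lambda>\<omega>. Z \<omega> ^ 4 + 4 * m * Z \<omega> ^ 3 + (4 * m\<^sup>2 - 2) * Z \<omega> ^ 2 - 4 * m * Z \<omega> ^ 1 + 1)"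
    unfolding h_def by (rule ext) (simp add: power2_eq_square eval_nat_numeral algebra_simps)
  show "integrable M (\<lambda>\<omega>. (h \<omega>)\<^sup>2)" unfolding h2
    by (intro Bochner_Integration.integrable_add Bochner_Integration.integrable_diff integrable_mult_right I) auto
  show "expectation (\<lambda>\<omega>. (h \<omega>)\<^sup>2) = 4 * m\<^sup>2 + 2" unfolding h2 using I[of 2] I[of 3] I[of 4] I1 E
    by (simp add: prob_space Bochner_Integration.integral_add Bochner_Integration.integral_diff)
qed

lemma (in prob_space) null_h:
  assumes Z: "distributed M lborel Z std_normal_density" and a: "a \<ge> 0"
  defines "h \<equiv> \<lambda>\<omega>. ((Z \<omega>)\<^sup>2 - nu a) * (if \<bar>Z \<omega>\<bar> > a then 1 else 0)"
  shows "integrable M (\<lambda>\<omega>. (h \<omega>)\<^sup>2)" "expectation h = 0" "expectation (\<lambda>\<omega>. (h \<omega>)\<^sup>2) \<le> Tk 4 a"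
proof -
  define S where "S = {z::real. \<bar>z\<bar> > a}"
  define f where "f k z = indicator S z * (z^k * std_normal_density z)" for k z
  have fi: "integrable lborel (f k)" for k unfolding f_def S_def by (rule Tk_integrable)
  have fI: "(\<integral>z. f k z \<partial>lborel) = Tk k a" for k unfolding f_def S_def Tk_alt ..
  define \<nu> where "\<nu> = nu a"
  have T0: "Tk 0 a > 0" by (rule T0_pos[OF a])
  have nuT: "\<nu> * Tk 0 a = Tk 2 a" using T0 by (simp add: \<nu>_def nu_Tk)
  have nunn: "\<nu> \<ge> 0" using T2_ge[OF a] T0 unfolding \<nu>_def nu_Tk
    by (smt (verit) divide_nonneg_pos mult_nonneg_nonneg zero_le_power2)
  have T2nn: "Tk 2 a \<ge> 0" using T2_ge[OF a] T0 by (smt (verit) mult_nonneg_nonneg zero_le_power2)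
  define g where "g x = (x\<^sup>2 - \<nu>) * (if \<bar>x\<bar> > a then 1 else 0)" for x :: real
  have gm: "g \<in> borel_measurable lborel" unfolding g_def by measurable
  have g2m: "(\<lambda>x. (g x)\<^sup>2) \<in> borel_measurable lborel" using gm by measurable
  have eq1: "std_normal_density x * g x = f 2 x - \<nu> * f 0 x" for x
    unfolding f_def g_def S_def by (auto simp: algebra_simps split: split_indicator)
  have eq2: "std_normal_density x * (g x)\<^sup>2 = f 4 x - 2 * \<nu> * f 2 x + \<nu>\<^sup>2 * f 0 x" for x
    unfolding f_def g_def S_def by (auto simp: algebra_simps power2_eq_square eval_nat_numeral split: split_indicator)
  have hg: "h = (\<lambda>\<omega>. g (Z \<omega>))" unfolding h_def g_def \<nu>_def by simp
  have "integrable lborel (\<lambda>x. std_normal_density x * (g x)\<^sup>2)" unfolding eq2 using fi by simp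
  then show "integrable M (\<lambda>\<omega>. (h \<omega>)\<^sup>2)"
    unfolding hg using distributed_integrable[OF Z g2m] by simp
  have "expectation h = (\<integral>x. std_normal_density x * g x \<partial>lborel)"
    unfolding hg using distributed_integral[OF Z gm] by simp
  also have "\<dots> = Tk 2 a - \<nu> * Tk 0 a" unfolding eq1 using fi fI by simp
  finally show "expectation h = 0" using nuT by simp
  have "expectation (\<lambda>\<omega>. (h \<omega>)\<^sup>2) = (\<integral>x. std_normal_density x * (g x)\<^sup>2 \<partial>lborel)"
    unfolding hg using distributed_integral[OF Z g2m] by simp
  also have "\<dots> = Tk 4 a - 2 * \<nu> * Tk 2 a + \<nu>\<^sup>2 * Tk 0 a" unfolding eq2 using fi fI by simp
  also have "\<dots> = Tk 4 a - \<nu> * Tk 2 a" using nuT by (simp add: power2_eq_square algebra_simps flip: nuT)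
  also have "\<dots> \<le> Tk 4 a" using nunn T2nn by simp
  finally show "expectation (\<lambda>\<omega>. (h \<omega>)\<^sup>2) \<le> Tk 4 a" .
qed

definition cw :: "nat \<Rightarrow> nat \<Rightarrow> nat \<Rightarrow> real" where
  "cw t g i = (if i \<le> t - g then sqrt (real g / (real t * (real t - real g)))
               else - sqrt ((real t - real g) / (real t * real g)))"

lemma split_1t: "g \<le> t \<Longrightarrow> {1..t} = {1..t-g} \<union> {t-g+1..(t::nat)}" by auto

lemma cusum_lin:
  assumes "1 \<le> g" "g < t"
  shows "cusum y t g j = (\<Sum>i\<in>{1..t}. cw t g i * y i j)"
proof -
  have "(\<Sum>i\<in>{1..t}. cw t g i * y i j) = (\<Sum>i\<in>{1..t-g}. cw t g i * y i j) + (\<Sum>i\<in>{t-g+1..t}. cw t g i * y i j)"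
    using assms by (subst split_1t[of g t]) (auto intro: sum.union_disjoint)
  also have "(\<Sum>i\<in>{1..t-g}. cw t g i * y i j) = sqrt (real g / (real t * (real t - real g))) * (\<Sum>i=1..t-g. y i j)"
    by (simp add: cw_def sum_distrib_left)
  also have "(\<Sum>i\<in>{t-g+1..t}. cw t g i * y i j) = - sqrt ((real t - real g) / (real t * real g)) * (\<Sum>i=t-g+1..t. y i j)"
    by (simp add: cw_def sum_distrib_left)
  finally show ?thesis unfolding cusum_def by simp
qed

lemma cw_facts:
  assumes g1: "1 \<le> g" and gt: "g < t"
  defines "\<alpha> \<equiv> sqrt (real g / (real t * (real t - real g)))"
  shows "\<alpha> * (real t - real g) = sqrt ((real t - real g) / (real t * real g)) * real g"
    "(\<Sum>i\<in>{1..t}. (cw t g i)\<^sup>2) = 1"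
    "\<And>\<tau> u v. \<tau> \<le> t - g \<Longrightarrow> (\<Sum>i\<in>{1..t}. cw t g i * (if i \<le> \<tau> then u else v)) = \<alpha> * real \<tau> * (u - v)"
    "\<And>i. cw t g i \<noteq> 0"
proof -
  define T where "T = real t"
  define G where "G = real g"
  define \<beta> where "\<beta> = sqrt ((T - G) / (T * G))"
  have G0: "G > 0" "G < T" using assms by (auto simp: G_def T_def)
  have a2: "\<alpha>\<^sup>2 = G / (T * (T - G))" unfolding \<alpha>_def T_def[symmetric] G_def[symmetric]
    using G0 by (intro real_sqrt_pow2) auto
  have b2: "\<beta>\<^sup>2 = (T - G) / (T * G)" unfolding \<beta>_def
    using G0 by (intro real_sqrt_pow2) auto
  have a0: "\<alpha> > 0" unfolding \<alpha>_def using G0 by (auto simp: T_def G_def)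
  have b0: "\<beta> > 0" unfolding \<beta>_def using G0 by auto
  have ab: "\<alpha> * (T - G) = \<beta> * G"
  proof (rule power2_eq_imp_eq)
    show "(\<alpha> * (T - G))\<^sup>2 = (\<beta> * G)\<^sup>2"
      unfolding power_mult_distrib a2 b2 using G0 by (simp add: field_simps power2_eq_square)
  qed (use a0 b0 G0 in auto)
  then show "\<alpha> * (real t - real g) = sqrt ((real t - real g) / (real t * real g)) * real g"
    by (simp add: \<beta>_def T_def G_def)
  have cwe: "cw t g i = (if i \<le> t - g then \<alpha> else - \<beta>)" for i
    unfolding cw_def \<alpha>_def \<beta>_def T_def G_def by simp
  show "cw t g i \<noteq> 0" for i using a0 b0 by (simp add: cwe)
  have cardA: "real (t - g) = T - G" using gt by (simp add: T_def G_def of_nat_diff)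
  have "(\<Sum>i\<in>{1..t}. (cw t g i)\<^sup>2) = (\<Sum>i\<in>{1..t-g}. (cw t g i)\<^sup>2) + (\<Sum>i\<in>{t-g+1..t}. (cw t g i)\<^sup>2)"
    using assms by (subst split_1t[of g t]) (auto intro: sum.union_disjoint)
  also have "\<dots> = (T - G) * \<alpha>\<^sup>2 + G * \<beta>\<^sup>2"
    using gt cardA by (simp add: cwe G_def)
  also have "\<dots> = 1" using G0 unfolding a2 b2 by (simp add: field_simps)
  finally show "(\<Sum>i\<in>{1..t}. (cw t g i)\<^sup>2) = 1" .
  fix \<tau> :: nat and u v :: real assume tau: "\<tau> \<le> t - g"
  have "(\<Sum>i\<in>{1..t}. cw t g i * (if i \<le> \<tau> then u else v)) =
     (\<Sum>i\<in>{1..t-g}. cw t g i * (if i \<le> \<tau> then u else v)) + (\<Sum>i\<in>{t-g+1..t}. cw t g i * (if i \<le> \<tau> then u else v))"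
    using assms by (subst split_1t[of g t]) (auto intro: sum.union_disjoint)
  also have "(\<Sum>i\<in>{t-g+1..t}. cw t g i * (if i \<le> \<tau> then u else v)) = - \<beta> * G * v"
    using tau gt by (simp add: cwe G_def)
  also have "(\<Sum>i\<in>{1..t-g}. cw t g i * (if i \<le> \<tau> then u else v)) = \<alpha> * (\<Sum>i\<in>{1..t-g}. (if i \<le> \<tau> then u else v))"
    by (simp add: cwe sum_distrib_left)
  also have "(\<Sum>i\<in>{1..t-g}. (if i \<le> \<tau> then u else v)) = (\<Sum>i\<in>{1..\<tau>}. (if i \<le> \<tau> then u else v)) + (\<Sum>i\<in>{\<tau>+1..t-g}. (if i \<le> \<tau> then u else v))"
  proof -
    have "{1..t-g} = {1..\<tau>} \<union> {\<tau>+1..t-g}" using tau by auto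
    then show ?thesis by (simp add: sum.union_disjoint)
  qed
  also have "\<dots> = real \<tau> * u + (T - G - real \<tau>) * v"
    using tau gt by (simp add: T_def G_def of_nat_diff)
  finally have eqS: "(\<Sum>i\<in>{1..t}. cw t g i * (if i \<le> \<tau> then u else v)) = \<alpha> * (real \<tau> * u + (T - G - real \<tau>) * v) + - \<beta> * G * v" .
  have "T * \<alpha> * v = G * \<alpha> * v + G * \<beta> * v" using ab by (simp add: algebra_simps)
  then show "(\<Sum>i\<in>{1..t}. cw t g i * (if i \<le> \<tau> then u else v)) = \<alpha> * real \<tau> * (u - v)"
    unfolding eqS by (simp add: algebra_simps)
qed

lemma (in prob_space) Z_facts:
  fixes Y :: "nat \<Rightarrow> 'a \<Rightarrow> nat \<Rightarrow> real"
  assumes sig: "\<sigma> > 0"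
    and indep: "indep_vars (\<lambda>_. borel) (\<lambda>(i, j) \<omega>. Y i \<omega> j) ({1..} \<times> {..<p})"
    and dist: "\<forall>i\<ge>1. \<forall>j<p. distributed M lborel (\<lambda>\<omega>. Y i \<omega> j)
                    (normal_density (if i \<le> \<tau> then \<mu>1 j else \<mu>2 j) \<sigma>)"
    and g1: "1 \<le> g" and gt: "g < t" and tau: "\<tau> \<le> t - g"
  defines "m \<equiv> \<lambda>j. sqrt (real g / (real t * (real t - real g))) * real \<tau> * (\<mu>1 j - \<mu>2 j) / \<sigma>"
  defines "Z \<equiv> \<lambda>j \<omega>. cusum (\<lambda>i j. Y i \<omega> j) t g j / \<sigma> - m j"
  shows "\<And>j. j < p \<Longrightarrow> distributed M lborel (Z j) std_normal_density"
        "indep_vars (\<lambda>_. borel) Z {..<p}"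
proof -
  define F where "F = (\<lambda>(i, j) \<omega>. Y i \<omega> j :: real)"
  have Zs: "Z j \<omega> = (\<Sum>i\<in>{1..t}. cw t g i / \<sigma> * Y i \<omega> j) - m j" for j \<omega>
    unfolding Z_def using g1 gt by (simp add: cusum_lin sum_divide_distrib)
  note cwf = cw_facts[OF g1 gt]
  show "distributed M lborel (Z j) std_normal_density" if j: "j < p" for j
  proof -
    define I where "I = {1..t} \<times> {j}"
    define X where "X = (\<lambda>(i, j') \<omega>. cw t g i / \<sigma> * Y i \<omega> j')"
    define mu where "mu = (\<lambda>(i, j'). cw t g i / \<sigma> * (if i \<le> \<tau> then \<mu>1 j' else \<mu>2 j'))"
    define sd where "sd = (\<lambda>(i::nat, j'::nat). \<bar>cw t g i / \<sigma>\<bar> * \<sigma>)"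
    have ind0: "indep_vars (\<lambda>_. borel) (\<lambda>ij \<omega>. (\<lambda>x. cw t g (fst ij) / \<sigma> * x) ((\<lambda>(i, j) \<omega>. Y i \<omega> j) ij \<omega>)) ({1..} \<times> {..<p})"
      by (rule indep_vars_compose2[OF indep]) auto
    have indX: "indep_vars (\<lambda>_. borel) X I"
    proof -
      have "indep_vars (\<lambda>_. borel) (\<lambda>ij \<omega>. (\<lambda>x. cw t g (fst ij) / \<sigma> * x) ((\<lambda>(i, j) \<omega>. Y i \<omega> j) ij \<omega>)) I"
        by (rule indep_vars_subset[OF ind0]) (use j in \<open>auto simp: I_def\<close>)
      then show ?thesis by (rule indep_vars_cong[THEN iffD1, rotated 3]) (auto simp: X_def)
    qed
    have distX: "distributed M lborel (X ij) (normal_density (mu ij) (sd ij))" if "ij \<in> I" for ij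
    proof -
      obtain i where ij: "ij = (i, j)" "1 \<le> i" "i \<le> t" using \<open>ij \<in> I\<close> by (auto simp: I_def)
      have d: "distributed M lborel (\<lambda>\<omega>. Y i \<omega> j) (normal_density (if i \<le> \<tau> then \<mu>1 j else \<mu>2 j) \<sigma>)"
        using dist ij j by auto
      have "distributed M lborel (\<lambda>x. 0 + cw t g i / \<sigma> * Y i x j)
          (normal_density (0 + cw t g i / \<sigma> * (if i \<le> \<tau> then \<mu>1 j else \<mu>2 j)) (\<bar>cw t g i / \<sigma>\<bar> * \<sigma>))"
        by (rule normal_density_affine[OF d sig]) (use cwf(4) sig in simp)
      then show ?thesis by (simp add: ij X_def mu_def sd_def)
    qed
    have sdpos: "ij \<in> I \<Longrightarrow> 0 < sd ij" for ij using cwf(4) sig by (auto simp: sd_def split: prod.split)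
    have sumd: "distributed M lborel (\<lambda>x. \<Sum>ij\<in>I. X ij x) (normal_density (\<Sum>ij\<in>I. mu ij) (sqrt (\<Sum>ij\<in>I. (sd ij)\<^sup>2)))"
      by (rule sum_indep_normal[OF _ _ indX sdpos distX]) (use gt in \<open>auto simp: I_def\<close>)
    have reI: "I = (\<lambda>i. (i, j)) ` {1..t}" by (auto simp: I_def)
    have injI: "inj_on (\<lambda>i. (i, j)) {1..t}" by (auto simp: inj_on_def)
    have s1: "(\<Sum>ij\<in>I. X ij x) = (\<Sum>i\<in>{1..t}. cw t g i / \<sigma> * Y i x j)" for x
      unfolding reI by (subst sum.reindex[OF injI]) (simp add: X_def)
    have s2: "(\<Sum>ij\<in>I. mu ij) = m j"
    proof -
      have "(\<Sum>ij\<in>I. mu ij) = (\<Sum>i\<in>{1..t}. cw t g i * (if i \<le> \<tau> then \<mu>1 j else \<mu>2 j)) / \<sigma>"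
        unfolding reI by (subst sum.reindex[OF injI]) (simp add: mu_def sum_divide_distrib)
      also have "\<dots> = m j" using cwf(3)[OF tau] by (simp add: m_def)
      finally show ?thesis .
    qed
    have s3: "(\<Sum>ij\<in>I. (sd ij)\<^sup>2) = 1"
    proof -
      have "(\<Sum>ij\<in>I. (sd ij)\<^sup>2) = (\<Sum>i\<in>{1..t}. (cw t g i)\<^sup>2)"
        unfolding reI using sig by (subst sum.reindex[OF injI]) (simp add: sd_def power_mult_distrib power_divide)
      then show ?thesis using cwf(2) by simp
    qed
    have sumd': "distributed M lborel (\<lambda>x. \<Sum>i\<in>{1..t}. cw t g i / \<sigma> * Y i x j) (normal_density (m j) 1)"
      using sumd s1 s2 s3 by simp
    have "distributed M lborel (\<lambda>x. - m j + 1 * (\<Sum>i\<in>{1..t}. cw t g i / \<sigma> * Y i x j)) (normal_density (- m j + 1 * m j) (\<bar>1\<bar> * 1))"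
      by (rule normal_density_affine[OF sumd']) auto
    moreover have "Z j = (\<lambda>x. - m j + 1 * (\<Sum>i\<in>{1..t}. cw t g i / \<sigma> * Y i x j))"
      using Zs by (simp add: fun_eq_iff)
    ultimately show ?thesis by simp
  qed
  show "indep_vars (\<lambda>_. borel) Z {..<p}"
  proof -
    define K where "K j = {1..t} \<times> {j}" for j :: nat
    have r: "indep_vars (\<lambda>j. PiM (K j) (\<lambda>_. borel)) (\<lambda>j \<omega>. restrict (\<lambda>ij. (\<lambda>(i, j) \<omega>. Y i \<omega> j) ij \<omega>) (K j)) {..<p}"
      by (rule indep_vars_restrict[OF indep]) (auto simp: K_def disjoint_family_on_def)
    define Gf where "Gf j f = (\<Sum>i\<in>{1..t}. cw t g i / \<sigma> * f (i, j)) - m j" for j and f :: "nat \<times> nat \<Rightarrow> real"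
    have Gm: "Gf j \<in> borel_measurable (PiM (K j) (\<lambda>_. borel))" for j
      unfolding Gf_def
      by (intro borel_measurable_diff borel_measurable_sum borel_measurable_times borel_measurable_const
            measurable_component_singleton) (auto simp: K_def)
    have "indep_vars (\<lambda>_. borel) (\<lambda>j \<omega>. Gf j (restrict (\<lambda>ij. (\<lambda>(i, j) \<omega>. Y i \<omega> j) ij \<omega>) (K j))) {..<p}"
      by (rule indep_vars_compose2[OF r Gm])
    then show ?thesis
      by (rule indep_vars_cong[THEN iffD1, rotated 3]) (auto simp: Gf_def Zs K_def fun_eq_iff intro!: sum.cong)
  qed
qed

lemma Tk_nonneg: "even k \<Longrightarrow> Tk k a \<ge> 0"
  unfolding Tk_alt by (intro integral_nonneg_AE AE_I2 mult_nonneg_nonneg) (auto simp: zero_le_even_power)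

lemma (in prob_space) main_prob:
  fixes Y :: "nat \<Rightarrow> 'a \<Rightarrow> nat \<Rightarrow> real"
  assumes sig: "\<sigma> > 0"
    and indep: "indep_vars (\<lambda>_. borel) (\<lambda>(i, j) \<omega>. Y i \<omega> j) ({1..} \<times> {..<p})"
    and dist: "\<forall>i\<ge>1. \<forall>j<p. distributed M lborel (\<lambda>\<omega>. Y i \<omega> j)
                    (normal_density (if i \<le> \<tau> then \<mu>1 j else \<mu>2 j) \<sigma>)"
    and g1: "1 \<le> g" and gt: "g < t" and tau: "\<tau> \<le> t - g"
    and a: "a = 0 \<or> a \<ge> 2" and \<delta>: "0 < \<delta>"
    and kdef: "k = card {j. j < p \<and> \<mu>1 j \<noteq> \<mu>2 j}" and k1: "k \<ge> 1"
  defines "m \<equiv> \<lambda>j. sqrt (real g / (real t * (real t - real g))) * real \<tau> * (\<mu>1 j - \<mu>2 j) / \<sigma>"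
  defines "Ag \<equiv> \<lambda>\<omega>. (\<Sum>j<p. ((cusum (\<lambda>i j. Y i \<omega> j) t g j)\<^sup>2 / \<sigma>\<^sup>2 - nu a)
            * (if \<bar>cusum (\<lambda>i j. Y i \<omega> j) t g j\<bar> / \<sigma> > a then 1 else 0))"
  defines "\<psi> \<equiv> (\<Sum>j<p. (m j)\<^sup>2)"
  defines "B \<equiv> real p * Tk 4 a + 4 * \<psi> + 2 * real k"
  shows "Ag \<in> borel_measurable M"
    "prob {\<omega> \<in> space M. Ag \<omega> \<ge> \<psi> - real k * (nu a - 1) - sqrt (B / \<delta>)} \<ge> 1 - \<delta>"
proof -
  define Z where "Z = (\<lambda>j \<omega>. cusum (\<lambda>i j. Y i \<omega> j) t g j / \<sigma> - m j)"
  have Zd: "\<And>j. j < p \<Longrightarrow> distributed M lborel (Z j) std_normal_density"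
    and Zi: "indep_vars (\<lambda>_. borel) Z {..<p}"
    using Z_facts[OF sig indep dist g1 gt tau] unfolding Z_def m_def by auto
  have Zm[measurable]: "j < p \<Longrightarrow> Z j \<in> borel_measurable M" for j
    using Zi unfolding indep_vars_def by auto
  have a0: "a \<ge> 0" using a by auto
  define \<nu> where "\<nu> = nu a"
  have T0: "Tk 0 a > 0" by (rule T0_pos[OF a0])
  have nu_ge: "\<nu> \<ge> a\<^sup>2"
    using T2_ge[OF a0] T0 unfolding \<nu>_def nu_Tk by (simp add: pos_le_divide_eq)
  define D where "D = {j. j < p \<and> \<mu>1 j \<noteq> \<mu>2 j}"
  have Dsub: "D \<subseteq> {..<p}" by (auto simp: D_def)
  have mD: "j \<notin> D \<Longrightarrow> j < p \<Longrightarrow> m j = 0" for j by (auto simp: D_def m_def)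
  define trm where "trm = (\<lambda>x. (x\<^sup>2 - \<nu>) * (if \<bar>x\<bar> > a then 1 else (0::real)))"
  have Ag_eq: "Ag \<omega> = (\<Sum>j<p. trm (Z j \<omega> + m j))" for \<omega>
    unfolding Ag_def trm_def Z_def \<nu>_def using sig by (simp add: power_divide)
  have trmm: "trm \<in> borel_measurable borel" unfolding trm_def by measurable
  have Agm[measurable]: "Ag \<in> borel_measurable M"
    unfolding Ag_eq[abs_def]
  proof (intro borel_measurable_sum)
    fix j assume "j \<in> {..<p}" then have "j < p" by simp
    then have "(\<lambda>\<omega>. Z j \<omega> + m j) \<in> borel_measurable M" using Zm[OF \<open>j < p\<close>] by simp
    then show "(\<lambda>\<omega>. trm (Z j \<omega> + m j)) \<in> borel_measurable M" using measurable_compose[OF _ trmm] by blast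
  qed
  then show "Ag \<in> borel_measurable M" .
  define hf where "hf = (\<lambda>j x. if j \<in> D then 2 * m j * x + x\<^sup>2 - 1 else (x\<^sup>2 - \<nu>) * (if \<bar>x\<bar> > a then 1 else (0::real)))"
  define V where "V = (\<lambda>j \<omega>. hf j (Z j \<omega>))"
  have Vi: "indep_vars (\<lambda>_. borel) V {..<p}"
  proof -
    have hfm: "hf j \<in> borel_measurable borel" for j unfolding hf_def by measurable
    show ?thesis unfolding V_def by (rule indep_vars_compose2[OF Zi hfm])
  qed
  have Vm[measurable]: "j < p \<Longrightarrow> V j \<in> borel_measurable M" for j
    using Vi unfolding indep_vars_def by auto
  have Vfacts: "integrable M (\<lambda>\<omega>. (V j \<omega>)\<^sup>2) \<and> expectation (V j) = 0 \<and>
      expectation (\<lambda>\<omega>. (V j \<omega>)\<^sup>2) \<le> Tk 4 a + 4 * (m j)\<^sup>2 + 2 * (if j \<in> D then 1 else 0)" if j: "j < p" for j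
  proof (cases "j \<in> D")
    case True
    have V: "V j = (\<lambda>\<omega>. 2 * m j * Z j \<omega> + (Z j \<omega>)\<^sup>2 - 1)" using True by (simp add: V_def hf_def)
    show ?thesis unfolding V using signal_h[OF Zd[OF j], of "m j"] True Tk_nonneg[of 4 a] by simp
  next
    case False
    have V: "V j = (\<lambda>\<omega>. ((Z j \<omega>)\<^sup>2 - nu a) * (if \<bar>Z j \<omega>\<bar> > a then 1 else 0))" using False by (simp add: V_def hf_def \<nu>_def)
    note n = null_h[OF Zd[OF j] a0]
    have "0 \<le> (m j)\<^sup>2" by simp
    then show ?thesis unfolding V using n False by (smt (verit))
  qed
  define S where "S = (\<lambda>\<omega>. \<Sum>j<p. V j \<omega>)"
  have Sm[measurable]: "S \<in> borel_measurable M" unfolding S_def by (intro borel_measurable_sum) auto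
  have VI: "j < p \<Longrightarrow> integrable M (V j)" for j
    using Vfacts Vm by (blast intro: square_integrable_imp_integrable)
  have ES: "expectation S = 0" unfolding S_def using VI Vfacts by simp
  have S2: "integrable M (\<lambda>\<omega>. (S \<omega>)\<^sup>2) \<and> expectation (\<lambda>\<omega>. (S \<omega>)\<^sup>2) = (\<Sum>j<p. expectation (\<lambda>\<omega>. (V j \<omega>)\<^sup>2))"
    unfolding S_def by (rule sq_sum_indep[OF _ Vi]) (use Vfacts in auto)
  have "(\<Sum>j<p. expectation (\<lambda>\<omega>. (V j \<omega>)\<^sup>2)) \<le> (\<Sum>j<p. Tk 4 a + 4 * (m j)\<^sup>2 + 2 * (if j \<in> D then 1 else 0))"
    by (intro sum_mono) (use Vfacts in auto)
  also have "\<dots> = real p * Tk 4 a + 4 * \<psi> + 2 * real k"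
  proof -
    have "(\<Sum>j<p. (if j \<in> D then 1 else 0::real)) = real (card D)"
      using Dsub by (simp add: sum.If_cases Int_absorb1)
    then show ?thesis unfolding \<psi>_def kdef D_def[symmetric] by (simp add: sum.distrib sum_distrib_left flip: sum_distrib_left)
  qed
  finally have ES2: "expectation (\<lambda>\<omega>. (S \<omega>)\<^sup>2) \<le> B" using S2 unfolding B_def by simp
  have psi0: "\<psi> \<ge> 0" unfolding \<psi>_def by (intro sum_nonneg) auto
  have B0: "B > 0" unfolding B_def using psi0 k1 Tk_nonneg[of 4 a] by (simp add: add_pos_nonneg add_nonneg_pos)
  define r where "r = sqrt (B / \<delta>)"
  have r0: "r > 0" unfolding r_def using B0 \<delta> by simp
  have r2: "r\<^sup>2 = B / \<delta>" unfolding r_def using B0 \<delta> by simp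
  have cheb: "prob {\<omega> \<in> space M. \<bar>S \<omega> - expectation S\<bar> \<ge> r} \<le> variance S / r\<^sup>2"
    by (rule Chebyshev_inequality[OF Sm]) (use S2 r0 in auto)
  have "variance S = expectation (\<lambda>\<omega>. (S \<omega>)\<^sup>2)" using ES by simp
  then have "variance S / r\<^sup>2 \<le> B / (B / \<delta>)"
    unfolding r2 using ES2 B0 \<delta> by (intro divide_right_mono) auto
  also have "\<dots> = \<delta>" using B0 \<delta> by simp
  finally have pbad: "prob {\<omega> \<in> space M. \<bar>S \<omega>\<bar> \<ge> r} \<le> \<delta>" using cheb ES by simp
  have pw: "Ag \<omega> \<ge> \<psi> - real k * (\<nu> - 1) + S \<omega>" for \<omega>
  proof -
    have tj: "trm (Z j \<omega> + m j) \<ge> V j \<omega> + (if j \<in> D then (m j)\<^sup>2 - (\<nu> - 1) else 0)" if j: "j < p" for j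
    proof (cases "j \<in> D")
      case True
      have "trm (Z j \<omega> + m j) \<ge> (Z j \<omega> + m j)\<^sup>2 - \<nu>"
      proof (cases "\<bar>Z j \<omega> + m j\<bar> > a")
        case False
        then have "\<bar>Z j \<omega> + m j\<bar> \<le> a" by simp
        then have "\<bar>Z j \<omega> + m j\<bar>\<^sup>2 \<le> a\<^sup>2" by (intro power_mono) auto
        then have "(Z j \<omega> + m j)\<^sup>2 \<le> a\<^sup>2" by simp
        then show ?thesis using False nu_ge by (simp add: trm_def)
      qed (simp add: trm_def)
      then show ?thesis using True by (simp add: V_def hf_def power2_eq_square algebra_simps)
    next
      case False
      then show ?thesis using mD[OF False j] by (simp add: V_def hf_def trm_def)
    qed
    have "Ag \<omega> \<ge> (\<Sum>j<p. V j \<omega> + (if j \<in> D then (m j)\<^sup>2 - (\<nu> - 1) else 0))"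
      unfolding Ag_eq by (intro sum_mono tj) simp
    also have "(\<Sum>j<p. V j \<omega> + (if j \<in> D then (m j)\<^sup>2 - (\<nu> - 1) else 0)) = S \<omega> + (\<psi> - real k * (\<nu> - 1))"
    proof -
      have "(\<Sum>j<p. (if j \<in> D then (m j)\<^sup>2 - (\<nu> - 1) else 0)) = (\<Sum>j\<in>D. (m j)\<^sup>2 - (\<nu> - 1))"
        using Dsub by (simp add: sum.If_cases Int_absorb1)
      also have "\<dots> = (\<Sum>j\<in>D. (m j)\<^sup>2) - real k * (\<nu> - 1)"
        by (simp add: sum_subtractf kdef D_def)
      also have "(\<Sum>j\<in>D. (m j)\<^sup>2) = \<psi>"
        unfolding \<psi>_def using Dsub mD by (intro sum.mono_neutral_left) auto
      finally show ?thesis unfolding S_def by (simp add: sum.distrib)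
    qed
    finally show ?thesis by simp
  qed
  have sub: "space M - {\<omega> \<in> space M. \<bar>S \<omega>\<bar> \<ge> r} \<subseteq> {\<omega> \<in> space M. Ag \<omega> \<ge> \<psi> - real k * (nu a - 1) - sqrt (B / \<delta>)}"
  proof (intro subsetI)
    fix \<omega> assume "\<omega> \<in> space M - {\<omega> \<in> space M. \<bar>S \<omega>\<bar> \<ge> r}"
    then have w: "\<omega> \<in> space M" "\<bar>S \<omega>\<bar> < r" by auto
    have "Ag \<omega> \<ge> \<psi> - real k * (\<nu> - 1) + S \<omega>" by (rule pw)
    then have "Ag \<omega> \<ge> \<psi> - real k * (nu a - 1) - sqrt (B / \<delta>)"
      using w(2) unfolding r_def \<nu>_def by linarith
    then show "\<omega> \<in> {\<omega> \<in> space M. Ag \<omega> \<ge> \<psi> - real k * (nu a - 1) - sqrt (B / \<delta>)}" using w by simp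
  qed

  have "1 - \<delta> \<le> prob (space M - {\<omega> \<in> space M. \<bar>S \<omega>\<bar> \<ge> r})"
    using pbad by (subst prob_compl) auto
  also have "\<dots> \<le> prob {\<omega> \<in> space M. Ag \<omega> \<ge> \<psi> - real k * (nu a - 1) - sqrt (B / \<delta>)}"
    by (rule finite_measure_mono[OF sub]) measurable
  finally show "prob {\<omega> \<in> space M. Ag \<omega> \<ge> \<psi> - real k * (nu a - 1) - sqrt (B / \<delta>)} \<ge> 1 - \<delta>" .
qed

lemma ln_t_half: "t \<ge> (2::nat) \<Longrightarrow> ln (real t) \<ge> 1/2"
proof -
  assume "t \<ge> 2"
  then have "real t \<ge> 2" by simp
  then have "ln (real t) \<ge> ln 2" by simp
  then show ?thesis using ln2_ge_half by simp
qed

lemma L_ge1: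
  fixes x N :: real
  assumes "x > 0" "x\<^sup>2 \<le> N"
  shows "ln (exp 1 * N / x\<^sup>2) \<ge> 1"
proof -
  have x2: "x\<^sup>2 > 0" using assms by simp
  have "1 \<le> N / x\<^sup>2" using assms(2) by (simp add: pos_le_divide_eq[OF x2])
  then have "exp 1 * 1 \<le> exp 1 * (N / x\<^sup>2)" by (intro mult_left_mono) auto
  then have "exp 1 * N / x\<^sup>2 \<ge> exp 1" by simp
  then show ?thesis by (metis ln_exp exp_gt_zero ln_le_cancel_iff order_less_le_trans)
qed

lemma sq_exp_bound: "(L::real) \<ge> 0 \<Longrightarrow> L\<^sup>2 * exp (- L) \<le> 4"
proof -
  assume L: "L \<ge> 0"
  have "exp (L/2) \<ge> 1 + L/2" by (rule exp_ge_add_one_self)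
  then have "exp (L/2) \<ge> L/2" by linarith
  then have "(L/2)\<^sup>2 \<le> (exp (L/2))\<^sup>2" using L by (intro power_mono) auto
  also have "(exp (L/2))\<^sup>2 = exp L" by (simp add: power2_eq_square flip: exp_add)
  finally have "L\<^sup>2 \<le> 4 * exp L" by (simp add: power_divide)
  then show ?thesis by (simp add: exp_minus field_simps)
qed

lemma thresholded:
  fixes p s t k :: nat
  defines "N \<equiv> real p * ln (real t)"
  assumes t2: "t \<ge> 2" and k1: "1 \<le> k"
    and ss: "real s \<le> sqrt N" and sk: "real k / 2 \<le> real s" "s \<le> k" and kN: "real k \<le> sqrt N"
  shows "thr p s t \<ge> 2" "zfun s p t \<le> 2 * zfun k p t"
    "real k * (nu (thr p s t) - 1) \<le> 576 * zfun k p t"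
    "real p * Tk 4 (thr p s t) + 2 * real k \<le> 200 * (zfun k p t)\<^sup>2"
proof -
  have lnt: "ln (real t) \<ge> 1/2" using ln_t_half[OF t2] .
  have s0: "real s > 0" using sk k1 by simp
  have k0: "real k > 0" using k1 by simp
  have N0: "N \<ge> 0" unfolding N_def using lnt by simp
  have s2: "(real s)\<^sup>2 \<le> N" using power_mono[OF ss, of 2] N0 by simp
  have k2: "(real k)\<^sup>2 \<le> N" using power_mono[OF kN, of 2] N0 by simp
  have p0: "real p > 0"
  proof (rule ccontr)
    assume "\<not> real p > 0" then have "N = 0" unfolding N_def by simp
    moreover have "(real s)\<^sup>2 > 0" using s0 by simp
    ultimately show False using s2 by linarith
  qed
  define Ls where "Ls = ln (exp 1 * N / (real s)\<^sup>2)"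
  define Lk where "Lk = ln (exp 1 * N / (real k)\<^sup>2)"
  have Ls1: "Ls \<ge> 1" unfolding Ls_def by (rule L_ge1[OF s0 s2])
  have Lk1: "Lk \<ge> 1" unfolding Lk_def by (rule L_ge1[OF k0 k2])
  have zs: "zfun s p t = max (real s * Ls) (ln (real t))"
    unfolding zfun_def Ls_def N_def using ss N_def by (simp add: mult.assoc)
  have zk: "zfun k p t = max (real k * Lk) (ln (real t))"
    unfolding zfun_def Lk_def N_def using kN N_def by (simp add: mult.assoc)
  have kLk: "real k \<le> real k * Lk" using mult_left_mono[of 1 Lk "real k"] Lk1 by simp
  have zkge: "zfun k p t \<ge> real k * Lk" "zfun k p t \<ge> real k" using zk kLk by (auto simp: max_def)
  have thsq: "thr_sq p s t = 4 * Ls"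
  proof -
    have pw: "(real s) powi (-2) = 1 / (real s)\<^sup>2" by (simp add: power_int_minus divide_inverse)
    have "exp 1 * real p * real s powi - 2 * ln (real t) = exp 1 * N / (real s)\<^sup>2"
      unfolding pw N_def by simp
    then show ?thesis unfolding thr_sq_def Ls_def using ss unfolding N_def by simp
  qed
  have tha: "(thr p s t)\<^sup>2 = 4 * Ls" proof -
    have "thr_sq p s t \<ge> 0" using thsq Ls1 by simp
    then show ?thesis unfolding thr_def using thsq by simp
  qed
  show th2: "thr p s t \<ge> 2"
  proof -
    have "thr p s t \<ge> 0" unfolding thr_def using thsq Ls1 by simp
    moreover have "(thr p s t)\<^sup>2 \<ge> 2\<^sup>2" using tha Ls1 by simp
    ultimately show ?thesis using power2_le_imp_le by blast
  qed
  have LsLk: "Ls = Lk + 2 * ln (real k / real s)"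
  proof -
    have "exp 1 * N / (real s)\<^sup>2 = (exp 1 * N / (real k)\<^sup>2) * (real k / real s)\<^sup>2"
      using s0 k0 by (simp add: field_simps power2_eq_square)
    moreover have "exp 1 * N / (real k)\<^sup>2 > 0" using k0 N0 p0 lnt unfolding N_def by simp
    moreover have "(real k / real s)\<^sup>2 > 0" using k0 s0 by simp
    ultimately have "Ls = Lk + ln ((real k / real s)\<^sup>2)"
      unfolding Ls_def Lk_def by (simp only: ln_mult) auto
    then show ?thesis using s0 k0 by (simp add: ln_realpow)
  qed
  have lnks: "ln (real k / real s) \<le> real k / real s - 1"
    using s0 k0 by (intro ln_le_minus_one) simp
  have ks2: "real k / real s \<le> 2" using sk s0 by (simp add: divide_le_eq)
  have Ls_le: "Ls \<le> Lk + 2" using LsLk lnks ks2 by simp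
  have "real s * Ls \<le> 2 * (real k * Lk)"
  proof -
    have "real s * Ls = real s * Lk + 2 * (real s * ln (real k / real s))" using LsLk by (simp add: algebra_simps)
    also have "real s * ln (real k / real s) \<le> real s * (real k / real s - 1)"
      using lnks s0 by (intro mult_left_mono) auto
    also have "real s * (real k / real s - 1) = real k - real s" using s0 by (simp add: field_simps)
    finally have "real s * Ls \<le> real s * Lk + 2 * (real k - real s)" by simp
    also have "\<dots> \<le> real k * Lk + real k"
    proof -
      have "real s * Lk \<le> real k * Lk" using sk Lk1 by (intro mult_right_mono) auto
      moreover have "real k \<le> 2 * real s" using sk(1) by simp
      ultimately show ?thesis by (simp add: algebra_simps)
    qed
    also have "\<dots> \<le> 2 * (real k * Lk)" using kLk by linarith
    finally show ?thesis .
  qed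
  then show "zfun s p t \<le> 2 * zfun k p t" unfolding zs zk using lnt by (auto simp: max_def)
  have nub: "nu (thr p s t) \<le> 48 * (thr p s t)\<^sup>2" by (rule nu_big[OF th2])
  have "nu (thr p s t) - 1 \<le> 576 * Lk" using nub tha Ls_le Lk1 by simp
  then have "real k * (nu (thr p s t) - 1) \<le> real k * (576 * Lk)" using k0 by (intro mult_left_mono) auto
  then show "real k * (nu (thr p s t) - 1) \<le> 576 * zfun k p t" using zkge by simp
  define a where "a = thr p s t"
  have T4: "Tk 4 a \<le> 5 * a^3 * ee a" unfolding a_def by (rule T4_big[OF th2])
  have a2: "a\<^sup>2 = 4 * Ls" unfolding a_def by (rule tha)
  have a3: "a^3 \<le> 8 * Ls\<^sup>2"
  proof -
    have "a^3 * 2 \<le> a^3 * a" using th2 unfolding a_def by (intro mult_left_mono) auto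
    also have "a^3 * a = (a\<^sup>2)\<^sup>2" by (simp add: eval_nat_numeral)
    finally show ?thesis using a2 by (simp add: power_mult_distrib)
  qed
  have eea: "ee a = exp (- Ls) * exp (- Ls)" unfolding ee_def using a2 by (simp flip: exp_add)
  have eLs: "exp (- Ls) = (real s)\<^sup>2 / (exp 1 * N)"
  proof -
    have "exp 1 * N / (real s)\<^sup>2 > 0" using s0 N0 p0 lnt unfolding N_def by simp
    then show ?thesis unfolding Ls_def by (simp add: exp_minus)
  qed
  have pe: "real p * exp (- Ls) \<le> (real s)\<^sup>2"
  proof -
    have "real p * exp (- Ls) = (real s)\<^sup>2 / (exp 1 * ln (real t))"
      unfolding eLs N_def using p0 by (simp add: field_simps)
    also have "\<dots> \<le> (real s)\<^sup>2 / 1"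
    proof (intro divide_left_mono)
      have "exp 1 \<ge> (2::real)" using exp_ge_add_one_self[of 1] by simp
      then have "2 * (1/2) \<le> exp 1 * ln (real t)" using lnt by (intro mult_mono) auto
      then show "1 \<le> exp 1 * ln (real t)" by simp
    qed (use lnt in auto)
    finally show ?thesis by simp
  qed
  have "real p * Tk 4 a \<le> real p * (5 * (8 * Ls\<^sup>2) * ee a)"
  proof -
    have "5 * a^3 * ee a \<le> 5 * (8 * Ls\<^sup>2) * ee a" using a3 ee_pos[of a] by (intro mult_right_mono) auto
    then have "Tk 4 a \<le> 5 * (8 * Ls\<^sup>2) * ee a" using T4 by linarith
    then show ?thesis using p0 by (intro mult_left_mono) auto
  qed
  also have "\<dots> = 40 * (Ls\<^sup>2 * exp (- Ls)) * (real p * exp (- Ls))" unfolding eea by simp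
  also have "\<dots> \<le> 40 * 4 * (real s)\<^sup>2"
    using sq_exp_bound[of Ls] Ls1 pe by (intro mult_mono) auto
  also have "\<dots> \<le> 160 * (real k)\<^sup>2" using sk s0 by (simp add: power_mono)
  finally have pT: "real p * Tk 4 a \<le> 160 * (real k)\<^sup>2" .
  have "2 * real k \<le> 2 * (real k)\<^sup>2" using k1 by (simp add: power2_eq_square)
  moreover have "(real k)\<^sup>2 \<le> (zfun k p t)\<^sup>2" using zkge k0 by (intro power_mono) auto
  ultimately show "real p * Tk 4 (thr p s t) + 2 * real k \<le> 200 * (zfun k p t)\<^sup>2"
    using pT unfolding a_def by linarith
qed

lemma dense:
  fixes p s t k :: nat
  defines "N \<equiv> real p * ln (real t)"
  assumes t2: "t \<ge> 2" and k1: "1 \<le> k" and kp: "k \<le> p"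
    and ss: "real s > sqrt N" and sp: "s = p" and kN: "real k \<ge> sqrt N"
  shows "thr p s t = 0" "zfun k p t \<ge> 0" "zfun s p t \<le> 2 * zfun k p t"
    "real k * (nu (thr p s t) - 1) \<le> 576 * zfun k p t"
    "real p * Tk 4 (thr p s t) + 2 * real k \<le> 200 * (zfun k p t)\<^sup>2"
proof -
  have lnt: "ln (real t) \<ge> 1/2" using ln_t_half[OF t2] .
  have p1: "real p \<ge> 1" using k1 kp by simp
  have N0: "N > 0" unfolding N_def using lnt p1 by simp
  have Np: "N \<ge> real p / 2" unfolding N_def using lnt p1 mult_left_mono[OF lnt, of "real p"] by simp
  have nss: "\<not> real s \<le> sqrt (real p * ln (real t))" using ss unfolding N_def by simp
  show th: "thr p s t = 0" unfolding thr_def thr_sq_def using nss by simp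
  have zs: "zfun s p t = sqrt N" unfolding zfun_def N_def using ss unfolding N_def by simp
  have zk: "zfun k p t \<ge> sqrt N"
  proof (cases "real k > sqrt N")
    case True then show ?thesis unfolding zfun_def N_def using True unfolding N_def by simp
  next
    case False
    then have keq: "real k = sqrt N" using kN by simp
    then have k2: "(real k)\<^sup>2 = N" using N0 by simp
    have nz: "real p * ln (real t) \<noteq> 0" using N0 unfolding N_def by linarith
    have "exp 1 * real p * ln (real t) / (real k)\<^sup>2 = exp 1 * (real p * ln (real t)) / (real p * ln (real t))"
      unfolding k2 N_def by (simp add: mult.assoc)
    also have "\<dots> = exp 1" using nz by simp
    finally have "exp 1 * real p * ln (real t) / (real k)\<^sup>2 = exp 1" .
    then have "zfun k p t = max (real k) (ln (real t))" unfolding zfun_def using False unfolding N_def by simp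
    then show ?thesis using keq by simp
  qed
  have "sqrt N \<ge> 0" using N0 by simp
  then show z0: "zfun k p t \<ge> 0" using zk by linarith
  show "zfun s p t \<le> 2 * zfun k p t" using zs zk z0 by simp
  show "real k * (nu (thr p s t) - 1) \<le> 576 * zfun k p t" using th T_at0 z0 by simp
  have "(sqrt N)\<^sup>2 \<le> (zfun k p t)\<^sup>2" using zk N0 by (intro power_mono) auto
  then have zN: "N \<le> (zfun k p t)\<^sup>2" using N0 by simp
  have "real p * Tk 4 (thr p s t) + 2 * real k = 3 * real p + 2 * real k" using th T_at0 by simp
  also have "\<dots> \<le> 10 * N" using kp Np by simp
  also have "\<dots> \<le> 200 * (zfun k p t)\<^sup>2" using zN N0 by simp
  finally show "real p * Tk 4 (thr p s t) + 2 * real k \<le> 200 * (zfun k p t)\<^sup>2" .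
qed

lemma combine:
  fixes zs zk K P \<psi> \<delta> lam :: real
  assumes z0: "zk \<ge> 0" and zs: "zs \<le> 2 * zk" and K: "K \<le> 576 * zk" and P: "P \<le> 200 * zk\<^sup>2"
    and psi: "\<psi> \<ge> 0" and d: "0 < \<delta>" "\<delta> < 1" and lam: "lam > 0"
  shows "lam * zs + K + sqrt ((P + 4 * \<psi>) / \<delta>) \<le> (600 / sqrt \<delta> + 2 * lam) * zk + 600 / sqrt \<delta> * sqrt \<psi>"
proof -
  define q where "q = sqrt \<psi>"
  have q0: "q \<ge> 0" and q2: "q\<^sup>2 = \<psi>" using psi by (auto simp: q_def)
  define sd where "sd = sqrt \<delta>"
  have sd0: "sd > 0" and sd1: "sd \<le> 1" using d by (auto simp: sd_def)
  have zq: "zk * q \<ge> 0" using z0 q0 by simp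
  have ex: "(15 * zk + 2 * q)\<^sup>2 = 225 * zk\<^sup>2 + 60 * (zk * q) + 4 * q\<^sup>2" by (simp add: power2_eq_square algebra_simps)
  have "P + 4 * \<psi> \<le> (15 * zk + 2 * q)\<^sup>2" unfolding ex using P q2 zq by (smt (verit) zero_le_power2)
  then have "sqrt (P + 4 * \<psi>) \<le> sqrt ((15 * zk + 2 * q)\<^sup>2)" by (rule real_sqrt_le_mono)
  also have "\<dots> = 15 * zk + 2 * q" using z0 q0 by simp
  finally have sB: "sqrt (P + 4 * \<psi>) \<le> 15 * zk + 2 * q" .
  have "sqrt ((P + 4 * \<psi>) / \<delta>) = sqrt (P + 4 * \<psi>) / sd" by (simp add: sd_def real_sqrt_divide)
  also have "\<dots> \<le> (15 * zk + 2 * q) / sd" using sB sd0 by (intro divide_right_mono) auto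
  finally have A: "sqrt ((P + 4 * \<psi>) / \<delta>) \<le> (15 * zk + 2 * q) / sd" .
  have B: "K \<le> 576 * zk / sd"
  proof -
    have "576 * zk \<le> 576 * zk / sd" using z0 sd0 sd1 by (simp add: le_divide_eq mult_left_le)
    then show ?thesis using K by linarith
  qed
  have C: "lam * zs \<le> 2 * lam * zk" using zs lam by (simp add: mult_left_mono)
  have "lam * zs + K + sqrt ((P + 4 * \<psi>) / \<delta>) \<le> 2 * lam * zk + 576 * zk / sd + (15 * zk + 2 * q) / sd"
    using A B C by linarith
  also have "\<dots> \<le> (600 / sd + 2 * lam) * zk + 600 / sd * q"
  proof -
    have "576 * zk / sd + (15 * zk + 2 * q) / sd = (591 * zk + 2 * q) / sd" by (simp add: add_divide_distrib)
    also have "\<dots> \<le> (600 * zk + 600 * q) / sd" using z0 q0 sd0 by (intro divide_right_mono) auto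
    finally show ?thesis by (simp add: algebra_simps add_divide_distrib)
  qed
  finally show ?thesis unfolding sd_def q_def .
qed

theorem lemma4:
  shows "\<exists>Cf :: real \<Rightarrow> real. (\<forall>\<delta>. 0 < \<delta> \<and> \<delta> < 1 \<longrightarrow> Cf \<delta> > 0) \<and>
   (\<forall>(M :: 'a measure) (Y :: nat \<Rightarrow> 'a \<Rightarrow> nat \<Rightarrow> real) (p :: nat) (\<tau> :: nat)
      (\<mu>1 :: nat \<Rightarrow> real) (\<mu>2 :: nat \<Rightarrow> real) (\<sigma> :: real) (t :: nat).
     prob_space M \<and> \<sigma> > 0 \<and> \<tau> \<ge> 1 \<and>
     prob_space.indep_vars M (\<lambda>_. borel) (\<lambda>(i, j) \<omega>. Y i \<omega> j) ({1..} \<times> {..<p}) \<and>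
     (\<forall>i\<ge>1. \<forall>j<p. distributed M lborel (\<lambda>\<omega>. Y i \<omega> j)
                    (normal_density (if i \<le> \<tau> then \<mu>1 j else \<mu>2 j) \<sigma>)) \<and>
     card {j. j < p \<and> \<mu>1 j \<noteq> \<mu>2 j} \<ge> 1 \<and>
     t > \<tau>
     \<longrightarrow>
     (let k = card {j. j < p \<and> \<mu>1 j \<noteq> \<mu>2 j};
          \<phi> = sqrt (\<Sum>j<p. (\<mu>1 j - \<mu>2 j)\<^sup>2)
      in \<exists>s \<in> Sgrid p t.
          (real k < sqrt (real p * ln (real t)) \<longrightarrow> real k / 2 \<le> real s \<and> s \<le> k) \<and>
          (real k \<ge> sqrt (real p * ln (real t)) \<longrightarrow> s = p) \<and>
          (\<forall>\<delta> (lam :: real) (g :: nat). 0 < \<delta> \<and> \<delta> < 1 \<and> lam > 0 \<and> 1 \<le> g \<and> g \<le> t - \<tau> \<longrightarrow>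
            (let \<psi> = real g * (real \<tau>)\<^sup>2 / (real t * (real t - real g)) * \<phi>\<^sup>2 / \<sigma>\<^sup>2
             in measure M {\<omega> \<in> space M.
                  Astat p \<sigma> (\<lambda>i j. Y i \<omega> j) t s g - lam * zfun s p t
                  \<ge> \<psi> - (Cf \<delta> + 2 * lam) * zfun k p t - Cf \<delta> * sqrt \<psi>}
                \<ge> 1 - \<delta>))))"
proof (rule exI[of _ "\<lambda>\<delta>. 600 / sqrt \<delta>"], intro conjI allI impI)
  fix \<delta> :: real assume "0 < \<delta> \<and> \<delta> < 1"
  then show "600 / sqrt \<delta> > 0" by simp
next
  fix M :: "'a measure" and Y :: "nat \<Rightarrow> 'a \<Rightarrow> nat \<Rightarrow> real" and p \<tau> :: nat
    and \<mu>1 \<mu>2 :: "nat \<Rightarrow> real" and \<sigma> :: real and t :: nat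
  assume H: "prob_space M \<and> \<sigma> > 0 \<and> \<tau> \<ge> 1 \<and>
     prob_space.indep_vars M (\<lambda>_. borel) (\<lambda>(i, j) \<omega>. Y i \<omega> j) ({1..} \<times> {..<p}) \<and>
     (\<forall>i\<ge>1. \<forall>j<p. distributed M lborel (\<lambda>\<omega>. Y i \<omega> j)
                    (normal_density (if i \<le> \<tau> then \<mu>1 j else \<mu>2 j) \<sigma>)) \<and>
     card {j. j < p \<and> \<mu>1 j \<noteq> \<mu>2 j} \<ge> 1 \<and> t > \<tau>"
  interpret prob_space M using H by simp
  have sig: "\<sigma> > 0" and tau1: "\<tau> \<ge> 1" and tt: "t > \<tau>" using H by auto
  have indep: "indep_vars (\<lambda>_. borel) (\<lambda>(i, j) \<omega>. Y i \<omega> j) ({1..} \<times> {..<p})" using H by simp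
  have dist: "\<forall>i\<ge>1. \<forall>j<p. distributed M lborel (\<lambda>\<omega>. Y i \<omega> j)
                    (normal_density (if i \<le> \<tau> then \<mu>1 j else \<mu>2 j) \<sigma>)" using H by simp
  define k where "k = card {j. j < p \<and> \<mu>1 j \<noteq> \<mu>2 j}"
  have k1: "k \<ge> 1" using H by (simp add: k_def)
  have kp: "k \<le> p" unfolding k_def by (rule order_trans[OF card_mono[of "{..<p}"]]) auto
  define N where "N = real p * ln (real t)"
  have t2: "t \<ge> 2" using tau1 tt by simp
  have lnt: "ln (real t) \<ge> 1/2" by (rule ln_t_half[OF t2])
  obtain s where sS: "s \<in> Sgrid p t"
    and c1: "real k < sqrt N \<Longrightarrow> real k / 2 \<le> real s \<and> s \<le> k"
    and c2: "real k \<ge> sqrt N \<Longrightarrow> s = p"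
  proof (cases "real k < sqrt N")
    case True
    obtain i where i: "2^i \<le> k" "k < 2^(i+1)" using ex_power_ivl1[of 2 k] k1 by auto
    have "real i \<le> log 2 (real k)"
      by (rule le_log_of_power) (use i in \<open>auto simp flip: of_nat_power\<close>)
    also have "\<dots> \<le> log 2 (min (sqrt N) (real p))"
      using True kp k1 by (intro log_mono) auto
    finally have "int i \<le> \<lfloor>log 2 (min (sqrt (real p * ln (real t))) (real p))\<rfloor>"
      unfolding N_def by (simp add: le_floor_iff)
    then have "2^i \<in> Sgrid p t" unfolding Sgrid_def by blast
    moreover have "real k / 2 \<le> real (2^i::nat)"
    proof -
      have "k \<le> 2 * 2^i" using i(2) by simp
      then have "real k \<le> real (2 * 2^i)" by (simp only: of_nat_le_iff)
      then show ?thesis by simp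
    qed
    ultimately show ?thesis using that True i by auto
  next
    case False
    show ?thesis by (rule that[of p]) (use False in \<open>auto simp: Sgrid_def\<close>)
  qed
  show "let k = card {j. j < p \<and> \<mu>1 j \<noteq> \<mu>2 j};
          \<phi> = sqrt (\<Sum>j<p. (\<mu>1 j - \<mu>2 j)\<^sup>2)
      in \<exists>s \<in> Sgrid p t.
          (real k < sqrt (real p * ln (real t)) \<longrightarrow> real k / 2 \<le> real s \<and> s \<le> k) \<and>
          (real k \<ge> sqrt (real p * ln (real t)) \<longrightarrow> s = p) \<and>
          (\<forall>\<delta> (lam :: real) (g :: nat). 0 < \<delta> \<and> \<delta> < 1 \<and> lam > 0 \<and> 1 \<le> g \<and> g \<le> t - \<tau> \<longrightarrow>
            (let \<psi> = real g * (real \<tau>)\<^sup>2 / (real t * (real t - real g)) * \<phi>\<^sup>2 / \<sigma>\<^sup>2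
             in measure M {\<omega> \<in> space M.
                  Astat p \<sigma> (\<lambda>i j. Y i \<omega> j) t s g - lam * zfun s p t
                  \<ge> \<psi> - (600 / sqrt \<delta> + 2 * lam) * zfun k p t - 600 / sqrt \<delta> * sqrt \<psi>}
                \<ge> 1 - \<delta>))"
    unfolding Let_def k_def[symmetric]
  proof (intro bexI[OF _ sS] conjI impI allI)
    show "real k < sqrt (real p * ln (real t)) \<Longrightarrow> real k / 2 \<le> real s" using c1 N_def by auto
    show "real k < sqrt (real p * ln (real t)) \<Longrightarrow> s \<le> k" using c1 N_def by auto
    show "real k \<ge> sqrt (real p * ln (real t)) \<Longrightarrow> s = p" using c2 N_def by auto
    fix \<delta> lam :: real and g :: nat
    assume dg: "0 < \<delta> \<and> \<delta> < 1 \<and> lam > 0 \<and> 1 \<le> g \<and> g \<le> t - \<tau>"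
    then have d0: "0 < \<delta>" and d1: "\<delta> < 1" and lam: "lam > 0" and g1: "1 \<le> g" and gtau: "g \<le> t - \<tau>" by auto
    have gt: "g < t" using gtau tau1 tt by linarith
    have tau': "\<tau> \<le> t - g" using gtau tt by linarith
    define a where "a = thr p s t"
    have factsC: "(a = 0 \<or> a \<ge> 2) \<and> zfun k p t \<ge> 0 \<and> zfun s p t \<le> 2 * zfun k p t \<and>
      real k * (nu a - 1) \<le> 576 * zfun k p t \<and>
      real p * Tk 4 a + 2 * real k \<le> 200 * (zfun k p t)\<^sup>2"
    proof -
      consider (th) "real s \<le> sqrt N" "real k / 2 \<le> real s" "s \<le> k" "real k \<le> sqrt N"
        | (de) "real s > sqrt N" "s = p" "real k \<ge> sqrt N"
      proof (cases "real k < sqrt N")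
        case True
        then have "real k / 2 \<le> real s" "s \<le> k" using c1 by auto
        moreover have "real s \<le> sqrt N" using True \<open>s \<le> k\<close> by linarith
        ultimately show ?thesis using True by (intro that(1)) auto
      next
        case False
        then have sp: "s = p" using c2 by auto
        show ?thesis
        proof (cases "real s > sqrt N")
          case True then show ?thesis using sp False by (intro that(2)) auto
        next
          case F2: False
          then have "real k = sqrt N" "s = k" using False sp kp by auto
          moreover have "N \<ge> 0" unfolding N_def using lnt by simp
          ultimately show ?thesis using F2 by (intro that(1)) auto
        qed
      qed
      then show ?thesis
      proof cases
        case th
        note T = thresholded[OF t2 k1 th[unfolded N_def]]
        have "zfun k p t = max (real k * ln (exp 1 * real p * ln (real t) / (real k)\<^sup>2)) (ln (real t))"
          using th(4) unfolding zfun_def N_def by simp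
        then have "zfun k p t \<ge> 0" using lnt by simp
        then show ?thesis using T unfolding a_def by auto
      next
        case de
        note T = dense[OF t2 k1 kp de[unfolded N_def]]
        then show ?thesis unfolding a_def by auto
      qed
    qed
    then have facts: "a = 0 \<or> a \<ge> 2" "zfun k p t \<ge> 0" "zfun s p t \<le> 2 * zfun k p t"
      "real k * (nu a - 1) \<le> 576 * zfun k p t"
      "real p * Tk 4 a + 2 * real k \<le> 200 * (zfun k p t)\<^sup>2" by auto
    define m where "m = (\<lambda>j. sqrt (real g / (real t * (real t - real g))) * real \<tau> * (\<mu>1 j - \<mu>2 j) / \<sigma>)"
    define \<psi>0 where "\<psi>0 = (\<Sum>j<p. (m j)\<^sup>2)"
    define B where "B = real p * Tk 4 a + 4 * \<psi>0 + 2 * real k"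
    define Ag where "Ag = (\<lambda>\<omega>. (\<Sum>j<p. ((cusum (\<lambda>i j. Y i \<omega> j) t g j)\<^sup>2 / \<sigma>\<^sup>2 - nu a)
            * (if \<bar>cusum (\<lambda>i j. Y i \<omega> j) t g j\<bar> / \<sigma> > a then 1 else 0)))"
    note MP = main_prob[OF sig indep dist g1 gt tau' facts(1) d0 k_def k1]
    have AgA: "Astat p \<sigma> (\<lambda>i j. Y i \<omega> j) t s g = Ag \<omega>" for \<omega> unfolding Astat_def Ag_def a_def ..
    have psi_eq: "real g * (real \<tau>)\<^sup>2 / (real t * (real t - real g)) * (sqrt (\<Sum>j<p. (\<mu>1 j - \<mu>2 j)\<^sup>2))\<^sup>2 / \<sigma>\<^sup>2 = \<psi>0"
    proof -
      have gtr: "real g / (real t * (real t - real g)) \<ge> 0" using gt by simp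
      have "\<psi>0 = (\<Sum>j<p. (real g / (real t * (real t - real g))) * (real \<tau>)\<^sup>2 * (\<mu>1 j - \<mu>2 j)\<^sup>2 / \<sigma>\<^sup>2)"
        unfolding \<psi>0_def m_def using gtr by (simp add: power_mult_distrib power_divide)
      also have "\<dots> = real g * (real \<tau>)\<^sup>2 / (real t * (real t - real g)) * (\<Sum>j<p. (\<mu>1 j - \<mu>2 j)\<^sup>2) / \<sigma>\<^sup>2"
        by (simp add: sum_distrib_left sum_divide_distrib)
      finally show ?thesis by (simp add: sum_nonneg)
    qed
    have psi0: "\<psi>0 \<ge> 0" unfolding \<psi>0_def by (simp add: sum_nonneg)
    have comb: "lam * zfun s p t + real k * (nu a - 1) + sqrt ((real p * Tk 4 a + 2 * real k + 4 * \<psi>0) / \<delta>)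
        \<le> (600 / sqrt \<delta> + 2 * lam) * zfun k p t + 600 / sqrt \<delta> * sqrt \<psi>0"
      by (rule combine[OF facts(2) facts(3) facts(4) facts(5) psi0 d0 d1 lam])
    have Bre: "B = real p * Tk 4 a + 2 * real k + 4 * \<psi>0" unfolding B_def by simp
    have sub: "{\<omega> \<in> space M. Ag \<omega> \<ge> \<psi>0 - real k * (nu a - 1) - sqrt (B / \<delta>)} \<subseteq>
       {\<omega> \<in> space M. Astat p \<sigma> (\<lambda>i j. Y i \<omega> j) t s g - lam * zfun s p t
                  \<ge> \<psi>0 - (600 / sqrt \<delta> + 2 * lam) * zfun k p t - 600 / sqrt \<delta> * sqrt \<psi>0}"
      using comb unfolding AgA Bre by auto
    have "1 - \<delta> \<le> prob {\<omega> \<in> space M. Ag \<omega> \<ge> \<psi>0 - real k * (nu a - 1) - sqrt (B / \<delta>)}"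
      using MP(2) unfolding \<psi>0_def B_def Ag_def m_def by simp
    also have "\<dots> \<le> prob {\<omega> \<in> space M. Astat p \<sigma> (\<lambda>i j. Y i \<omega> j) t s g - lam * zfun s p t
                  \<ge> \<psi>0 - (600 / sqrt \<delta> + 2 * lam) * zfun k p t - 600 / sqrt \<delta> * sqrt \<psi>0}"
    proof (rule finite_measure_mono[OF sub])
      have [measurable]: "Ag \<in> borel_measurable M" using MP(1) unfolding Ag_def by simp
      show "{\<omega> \<in> space M. Astat p \<sigma> (\<lambda>i j. Y i \<omega> j) t s g - lam * zfun s p t
                  \<ge> \<psi>0 - (600 / sqrt \<delta> + 2 * lam) * zfun k p t - 600 / sqrt \<delta> * sqrt \<psi>0} \<in> sets M"
        unfolding AgA by measurable
    qed
    finally show "1 - \<delta> \<le> measure M {\<omega> \<in> space M. Astat p \<sigma> (\<lambda>i j. Y i \<omega> j) t s g - lam * zfun s p t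
                  \<ge> real g * (real \<tau>)\<^sup>2 / (real t * (real t - real g)) * (sqrt (\<Sum>j<p. (\<mu>1 j - \<mu>2 j)\<^sup>2))\<^sup>2 / \<sigma>\<^sup>2
                     - (600 / sqrt \<delta> + 2 * lam) * zfun k p t
                     - 600 / sqrt \<delta> * sqrt (real g * (real \<tau>)\<^sup>2 / (real t * (real t - real g)) * (sqrt (\<Sum>j<p. (\<mu>1 j - \<mu>2 j)\<^sup>2))\<^sup>2 / \<sigma>\<^sup>2)}"
      unfolding psi_eq .
  qed
qed

end
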